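(* Let $\Delta_3=x_1x_2x_1\in\mathcal{B}_3$. For every integer $k\ge0$, $$V_3(\Delta_3^{2k})=2s^{12k}+s^{6k+2}+s^{6k-2},\qquad V_3(\Delta_3^{2k+1})=-s^{6k+5}-s^{6k+1}.$$
   Context: $\mathcal{B}_3$ is the braid group on three strands with standard Artin generators $x_1,x_2$; $V_3(\beta)$ is the Jones polynomial of the closure $\widehat\beta$, normalized by $V(\text{unknot})=1$ and $q^{-1}V_{L_+}-qV_{L_-}=(q^{1/2}-q^{-1/2})V_{L_0}$, written in the variable $s=q^{-1/2}$. Conventions: closures of $\alpha x_i^{e+2}\gamma$, $\alpha x_i^{e+1}\gamma$, $\alpha x_i^{e}\gamma$ play the roles of $L_-,L_0,L_+$ (e.g. the closure of $x_1^2\in\mathcal B_2$ has Jones polynomial $-s-s^5$). *)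

theory Defs
  imports Complex_Main
begin

text \<open>Braid words on n strands: a list of nonzero integers; the letter i (i > 0)
  stands for the Artin generator x_i, the letter -i for its inverse.\<close>

type_synonym braid_word = "int list"

definition levels :: "braid_word \<Rightarrow> nat" where
  "levels w = (if w = [] then 1 else length w)"

text \<open>Points of the closed diagram: (level, strand position); crossing j sits between
  level j and level (j+1) mod levels w (closure identifies top with bottom).\<close>
definition diag_points :: "nat \<Rightarrow> braid_word \<Rightarrow> (nat \<times> nat) set" where
  "diag_points n w = {0..<levels w} \<times> {1..n}"

text \<open>Edges produced by smoothing crossing j (between strands i and i+1):
  the vertical (identity) smoothing, or the horizontal (cup-cap) smoothing.\<close>
definition crossing_edges ::
  "nat \<Rightarrow> nat \<Rightarrow> nat \<Rightarrow> nat \<Rightarrow> bool \<Rightarrow> ((nat \<times> nat) \<times> (nat \<times> nat)) set" where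
  "crossing_edges n L j i vert =
     (if vert then {((j,p), ((j+1) mod L, p)) | p. p \<in> {1..n}}
      else {((j,i),(j,i+1)), (((j+1) mod L, i), ((j+1) mod L, i+1))}
           \<union> {((j,p), ((j+1) mod L, p)) | p. p \<in> {1..n} \<and> p \<noteq> i \<and> p \<noteq> i+1})"

definition state_edges :: "nat \<Rightarrow> braid_word \<Rightarrow> nat set \<Rightarrow> ((nat \<times> nat) \<times> (nat \<times> nat)) set" where
  "state_edges n w S =
     (\<Union>j\<in>{0..<length w}. crossing_edges n (levels w) j (nat \<bar>w ! j\<bar>) (j \<in> S))"

text \<open>Number of loops of the state S (S = set of crossings smoothed vertically).\<close>
definition state_loops :: "nat \<Rightarrow> braid_word \<Rightarrow> nat set \<Rightarrow> nat" where
  "state_loops n w S =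
     card (diag_points n w // ((state_edges n w S \<union> (state_edges n w S)\<inverse>)\<^sup>*))"

text \<open>Kauffman bracket (normalized so that the unknot has bracket 1), in the variable A.
  For a letter x_i the vertical smoothing gets weight A, for x_i^{-1} it gets A^{-1}.\<close>
definition kauffman_bracket :: "nat \<Rightarrow> braid_word \<Rightarrow> real \<Rightarrow> real" where
  "kauffman_bracket n w A =
     (\<Sum>S\<in>Pow {0..<length w}.
        (\<Prod>j\<in>{0..<length w}. if (j \<in> S) = (w ! j > 0) then A else inverse A)
        * (- A\<^sup>2 - inverse A ^ 2) ^ (state_loops n w S - 1))"

definition writhe :: "braid_word \<Rightarrow> int" where
  "writhe w = sum_list (map sgn w)"

text \<open>With this choice, the closure of x_1^2 in B_2 gets -s - s^5, matching the
  paper's conventions (closures of x_i^{e+2}, x_i^{e+1}, x_i^e play L_-, L_0, L_+).\<close>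
definition jones_closure :: "nat \<Rightarrow> braid_word \<Rightarrow> real \<Rightarrow> real" where
  "jones_closure n w s =
     (let A = s powr (-1/2) in ((- (A ^ 3)) powi (- writhe w)) * kauffman_bracket n w A)"

abbreviation V3 :: "braid_word \<Rightarrow> real \<Rightarrow> real" where
  "V3 \<equiv> jones_closure 3"

definition Delta3 :: braid_word where
  "Delta3 = [1, 2, 1]"

definition braid_pow :: "braid_word \<Rightarrow> nat \<Rightarrow> braid_word" where
  "braid_pow w m = concat (replicate m w)"

end

theory Submission
  imports Defs
begin

definition addR :: "('a\<times>'a) set \<Rightarrow> 'a \<Rightarrow> 'a \<Rightarrow> ('a\<times>'a) set" where
  "addR K a b = K \<union> {(x,y). ((x,a)\<in>K \<and> (b,y)\<in>K) \<or> ((x,b)\<in>K \<and> (a,y)\<in>K)}"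

lemma rtrancl_add_edge:
  assumes "sym R"
  shows "(R \<union> {(a,b),(b,a)})\<^sup>* = addR (R\<^sup>*) a b"
proof
  have sK: "sym (R\<^sup>*)" using assms by (simp add: sym_rtrancl)
  show "(R \<union> {(a,b),(b,a)})\<^sup>* \<subseteq> addR (R\<^sup>*) a b"
  proof
    fix p assume "p \<in> (R \<union> {(a,b),(b,a)})\<^sup>*"
    then obtain x y where p: "p = (x,y)" and xy: "(x,y) \<in> (R \<union> {(a,b),(b,a)})\<^sup>*" by (cases p) auto
    from xy have "(x,y) \<in> addR (R\<^sup>*) a b"
    proof (induction rule: rtrancl_induct)
      case base then show ?case by (simp add: addR_def)
    next
      case (step y z)
      from step.hyps(2) show ?case
      proof
        assume "(y,z) \<in> R"
        then have "(y,z) \<in> R\<^sup>*" by simp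
        with step.IH show ?thesis unfolding addR_def by (auto intro: rtrancl_trans)
      next
        assume "(y,z) \<in> {(a,b),(b,a)}"
        then have yz: "(y=a \<and> z=b) \<or> (y=b \<and> z=a)" by auto
        from step.IH sK yz show ?thesis unfolding addR_def
          by (auto intro: rtrancl_trans dest: symD)
      qed
    qed
    then show "p \<in> addR (R\<^sup>*) a b" using p by simp
  qed
next
  show "addR (R\<^sup>*) a b \<subseteq> (R \<union> {(a,b),(b,a)})\<^sup>*"
  proof -
    have m: "R\<^sup>* \<subseteq> (R \<union> {(a,b),(b,a)})\<^sup>*" by (rule rtrancl_mono) auto
    have ab: "(a,b) \<in> (R \<union> {(a,b),(b,a)})\<^sup>*" "(b,a) \<in> (R \<union> {(a,b),(b,a)})\<^sup>*" by auto
    show ?thesis unfolding addR_def using m ab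
      by (auto intro: rtrancl_trans)
  qed
qed

lemma rtrancl_closed:
  assumes "R \<subseteq> V \<times> V" "(x,y) \<in> R\<^sup>*" "x \<in> V" shows "y \<in> V"
  using assms(2,3) by (induction rule: rtrancl_induct) (use assms(1) in auto)

lemma card_quot_add:
  assumes fin: "finite V" and symR: "sym R" and sub: "R \<subseteq> V \<times> V" and aV: "a \<in> V" and bV: "b \<in> V"
  shows "card (V // R\<^sup>*) = card (V // (R \<union> {(a,b),(b,a)})\<^sup>*) + (if (a,b)\<in>R\<^sup>* then 0 else 1)"
proof -
  define K where "K = R\<^sup>*"
  have sK: "sym K" using symR by (simp add: K_def sym_rtrancl)
  have tK: "trans K" by (simp add: K_def trans_rtrancl)
  have rK: "(x,x) \<in> K" for x by (simp add: K_def)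
  have symK: "(x,y)\<in>K \<Longrightarrow> (y,x)\<in>K" for x y by (rule symD[OF sK])
  have trK: "(x,y)\<in>K \<Longrightarrow> (y,z)\<in>K \<Longrightarrow> (x,z)\<in>K" for x y z by (rule transD[OF tK])
  have eqv: "K``{x} = K``{y}" if "(x,y) \<in> K" for x y
    using trK[OF symK[OF that]] trK[OF that] by blast
  have K': "(R \<union> {(a,b),(b,a)})\<^sup>* = addR K a b" unfolding K_def by (rule rtrancl_add_edge[OF symR])
  show ?thesis
  proof (cases "(a,b) \<in> K")
    case True
    have "(x,y)\<in>K" if "(x,a)\<in>K" "(b,y)\<in>K" for x y using trK[OF trK[OF that(1) True] that(2)] .
    moreover have "(x,y)\<in>K" if "(x,b)\<in>K" "(a,y)\<in>K" for x y using trK[OF trK[OF that(1) symK[OF True]] that(2)] .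
    ultimately have "addR K a b = K" unfolding addR_def by blast
    then show ?thesis using K' True by (simp add: K_def)
  next
    case False
    define A where "A = K``{a}"
    define B where "B = K``{b}"
    have cls: "addR K a b `` {x} = (if x \<in> A \<union> B then A \<union> B else K``{x})" for x
    proof (cases "x \<in> A \<union> B")
      case True
      then have xa: "(x,a)\<in>K \<or> (x,b)\<in>K" unfolding A_def B_def using symK by auto
      have nb: "\<not> ((x,a)\<in>K \<and> (x,b)\<in>K)" using False symK trK by metis
      have "addR K a b `` {x} = A \<union> B"
      proof (cases "(x,a)\<in>K")
        case True
        then have "(x,b)\<notin>K" using nb by simp
        moreover have "(x,y)\<in>K \<longleftrightarrow> (a,y)\<in>K" for y using True symK trK by metis
        ultimately show ?thesis unfolding addR_def A_def B_def using True by auto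
      next
        case F5: False
        then have xb: "(x,b)\<in>K" using xa by simp
        have "(x,y)\<in>K \<longleftrightarrow> (b,y)\<in>K" for y using xb symK trK by metis
        then show ?thesis unfolding addR_def A_def B_def using F5 xb by auto
      qed
      then show ?thesis using True by simp
    next
      case F2: False
      then have "(x,a) \<notin> K" "(x,b) \<notin> K" unfolding A_def B_def using symK by auto
      then show ?thesis using F2 unfolding addR_def by auto
    qed
    have AB: "A \<noteq> B" using False rK unfolding A_def B_def by auto
    have Q: "V // K = {K``{x} | x. x \<in> V}" by (auto simp: quotient_def)
    have Q': "V // addR K a b = {addR K a b``{x} | x. x \<in> V}" by (auto simp: quotient_def)
    have AQ: "A \<in> V // K" "B \<in> V // K" using aV bV Q A_def B_def by auto
    have Q'eq: "V // addR K a b = insert (A \<union> B) (V // K - {A, B})"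
    proof
      show "V // addR K a b \<subseteq> insert (A \<union> B) (V // K - {A, B})"
      proof
        fix X assume "X \<in> V // addR K a b"
        then obtain x where x: "x \<in> V" "X = addR K a b``{x}" using Q' by auto
        show "X \<in> insert (A \<union> B) (V // K - {A, B})"
        proof (cases "x \<in> A \<union> B")
          case True then show ?thesis using x cls by simp
        next
          case F3: False
          then have "K``{x} \<noteq> A" "K``{x} \<noteq> B" using rK by (auto simp: A_def B_def)
          then show ?thesis using x cls F3 Q by auto
        qed
      qed
    next
      show "insert (A \<union> B) (V // K - {A, B}) \<subseteq> V // addR K a b"
      proof
        fix X assume X: "X \<in> insert (A \<union> B) (V // K - {A, B})"
        show "X \<in> V // addR K a b"
        proof (cases "X = A \<union> B")
          case True
          have "a \<in> A" using rK A_def by auto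
          then have "addR K a b `` {a} = A \<union> B" using cls by simp
          then show ?thesis using True aV Q' by auto
        next
          case F4: False
          then obtain x where x: "x \<in> V" "X = K``{x}" "X \<noteq> A" "X \<noteq> B" using X Q by auto
          have "x \<notin> A \<union> B"
          proof
            assume "x \<in> A \<union> B"
            then have "(a,x)\<in>K \<or> (b,x)\<in>K" unfolding A_def B_def by auto
            then have "K``{x} = A \<or> K``{x} = B" unfolding A_def B_def using eqv[of a x] eqv[of b x] by auto
            then show False using x by auto
          qed
          then show ?thesis using x cls Q' by auto
        qed
      qed
    qed
    have "V // K = (\<lambda>x. K``{x}) ` V" by (auto simp: quotient_def)
    then have finQ: "finite (V // K)" using fin by simp
    have notin: "A \<union> B \<notin> V // K - {A, B}"
    proof
      assume "A \<union> B \<in> V // K - {A, B}"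
      then obtain x where x: "K``{x} = A \<union> B" "K``{x} \<noteq> A" using Q by auto
      have "a \<in> K``{x}" using x rK A_def by auto
      then have "K``{x} = A" using eqv[of x a] A_def by auto
      then show False using x by simp
    qed
    have "card (V // addR K a b) = card (V // K - {A,B}) + 1"
      using Q'eq notin finQ by simp
    moreover have "card (V // K - {A,B}) + 2 = card (V // K)"
    proof -
      have "card {A,B} \<le> card (V // K)" using AQ finQ by (intro card_mono) auto
      then show ?thesis using AQ AB finQ by (simp add: card_Diff_subset)
    qed
    ultimately show ?thesis using K' False by (simp add: K_def)
  qed
qed

definition addP :: "('l \<Rightarrow> 'l \<Rightarrow> bool) \<Rightarrow> 'l \<Rightarrow> 'l \<Rightarrow> ('l \<Rightarrow> 'l \<Rightarrow> bool)" where
  "addP P a b = (\<lambda>u v. P u v \<or> (P u a \<and> P b v) \<or> (P u b \<and> P a v))"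

fun absE :: "('l \<Rightarrow> 'l \<Rightarrow> bool) \<Rightarrow> ('l \<times> 'l) list \<Rightarrow> ('l \<Rightarrow> 'l \<Rightarrow> bool)" where
  "absE P [] = P"
| "absE P ((a,b)#es) = absE (addP P a b) es"

fun mergeC :: "('l \<Rightarrow> 'l \<Rightarrow> bool) \<Rightarrow> ('l \<times> 'l) list \<Rightarrow> nat" where
  "mergeC P [] = 0"
| "mergeC P ((a,b)#es) = (if P a b then 0 else 1) + mergeC (addP P a b) es"

definition qq :: "nat \<Rightarrow> nat" where "qq i = (if i = 1 then 3 else 1)"

definition esA :: "nat \<Rightarrow> bool \<Rightarrow> ((nat\<times>nat)\<times>(nat\<times>nat)) list" where
  "esA i b = (if b then [((1,1),(2,1)),((1,2),(2,2)),((1,3),(2,3))]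
              else [((1,i),(1,i+1)),((2,i),(2,i+1)),((1,qq i),(2,qq i))])"

definition esF :: "nat \<Rightarrow> bool \<Rightarrow> ((nat\<times>nat)\<times>(nat\<times>nat)) list" where
  "esF i b = (if b then [((1,1),(0,1)),((1,2),(0,2)),((1,3),(0,3))]
              else [((1,i),(1,i+1)),((0,i),(0,i+1)),((1,qq i),(0,qq i))])"

datatype tl = TI | T1 | T2 | Ta | Tb

fun arcs :: "tl \<Rightarrow> ((nat\<times>nat)\<times>(nat\<times>nat)) list" where
  "arcs TI = [((0,1),(1,1)),((0,2),(1,2)),((0,3),(1,3))]"
| "arcs T1 = [((0,1),(0,2)),((1,1),(1,2)),((0,3),(1,3))]"
| "arcs T2 = [((0,2),(0,3)),((1,2),(1,3)),((0,1),(1,1))]"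
| "arcs Ta = [((0,1),(0,2)),((1,2),(1,3)),((0,3),(1,1))]"
| "arcs Tb = [((0,2),(0,3)),((1,1),(1,2)),((0,1),(1,3))]"

definition relD :: "tl \<Rightarrow> nat\<times>nat \<Rightarrow> nat\<times>nat \<Rightarrow> bool" where
  "relD D u v = (u = v \<or> (u,v) \<in> set (arcs D) \<or> (v,u) \<in> set (arcs D))"

definition Pext :: "tl \<Rightarrow> nat\<times>nat \<Rightarrow> nat\<times>nat \<Rightarrow> bool" where
  "Pext D u v = (if fst u = 2 \<or> fst v = 2 then u = v else relD D u v)"

definition stepD :: "tl \<Rightarrow> nat \<Rightarrow> bool \<Rightarrow> tl \<times> nat" where
  "stepD D i b = (if b then (D,0) else (case D of
      TI \<Rightarrow> (if i=1 then (T1,0) else (T2,0))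
    | T1 \<Rightarrow> (if i=1 then (T1,1) else (Ta,0))
    | T2 \<Rightarrow> (if i=1 then (Tb,0) else (T2,1))
    | Ta \<Rightarrow> (if i=1 then (T1,0) else (Ta,1))
    | Tb \<Rightarrow> (if i=1 then (Tb,1) else (T2,0))))"

definition closeD :: "tl \<Rightarrow> nat \<Rightarrow> bool \<Rightarrow> nat" where
  "closeD D i b = (case D of
      TI \<Rightarrow> (if b then 3 else 2)
    | T1 \<Rightarrow> (if b then 2 else if i=1 then 3 else 1)
    | T2 \<Rightarrow> (if b then 2 else if i=1 then 1 else 3)
    | Ta \<Rightarrow> (if b then 1 else 2)
    | Tb \<Rightarrow> (if b then 1 else 2))"

definition ren :: "nat\<times>nat \<Rightarrow> nat\<times>nat" where
  "ren u = (if fst u = 1 then (2, snd u) else u)"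

definition Lam0 :: "(nat\<times>nat) set" where "Lam0 = {0,1} \<times> {1,2,3}"

lemma Lam0_expand: "Lam0 = {(0,1),(0,2),(0,3),(1,1),(1,2),(1,3)}" by (auto simp: Lam0_def)

lemma check_step_i:
  assumes "i = 1 \<or> i = 2"
  shows "\<forall>u\<in>Lam0. \<forall>v\<in>Lam0. relD (fst (stepD D i b)) u v = absE (Pext D) (esA i b) (ren u) (ren v)"
  using assms unfolding Lam0_expand
  by (elim disjE; cases D; cases b; simp add: stepD_def esA_def qq_def addP_def Pext_def relD_def ren_def)

lemma check_merge:
  assumes "i = 1 \<or> i = 2"
  shows "mergeC (Pext D) (esA i b) + snd (stepD D i b) = 3"
  using assms
  by (elim disjE; cases D; cases b; simp add: stepD_def esA_def qq_def addP_def Pext_def relD_def)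

lemma check_close:
  assumes "i = 1 \<or> i = 2"
  shows "mergeC (relD D) (esF i b) + closeD D i b = 3"
  using assms
  by (elim disjE; cases D; cases b; simp add: closeD_def esF_def qq_def addP_def relD_def)

lemma check_init: "\<forall>u\<in>Lam0. \<forall>v\<in>Lam0. relD TI u v = (snd u = snd v)"
  unfolding Lam0_expand by (simp add: relD_def)

definition edgesOf :: "('l \<Rightarrow> 'p) \<Rightarrow> ('l\<times>'l) list \<Rightarrow> ('p\<times>'p) set" where
  "edgesOf emb es = set (map (\<lambda>(a,b). (emb a, emb b)) es)"

lemma edgesOf_Cons: "edgesOf emb ((a,b)#es) = insert (emb a, emb b) (edgesOf emb es)"
  by (simp add: edgesOf_def)

lemma proc:
  assumes "finite V" "sym R" "R \<subseteq> V \<times> V" "set es \<subseteq> Lam \<times> Lam" "emb ` Lam \<subseteq> V"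
    "\<forall>u\<in>Lam. \<forall>v\<in>Lam. P u v = ((emb u, emb v) \<in> R\<^sup>*)"
  shows "(\<forall>u\<in>Lam. \<forall>v\<in>Lam. absE P es u v =
            ((emb u, emb v) \<in> (R \<union> edgesOf emb es \<union> (edgesOf emb es)\<inverse>)\<^sup>*))
       \<and> card (V // R\<^sup>*) = card (V // (R \<union> edgesOf emb es \<union> (edgesOf emb es)\<inverse>)\<^sup>*) + mergeC P es"
  using assms
proof (induction es arbitrary: R P)
  case Nil
  then show ?case by (simp add: edgesOf_def)
next
  case (Cons e es)
  obtain a b where e: "e = (a,b)" by (cases e)
  have aL: "a \<in> Lam" and bL: "b \<in> Lam" using Cons.prems(4) e by auto
  define R1 where "R1 = R \<union> {(emb a, emb b), (emb b, emb a)}"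
  have sR1: "sym R1" using Cons.prems(2) unfolding R1_def sym_def by auto
  have subR1: "R1 \<subseteq> V \<times> V" using Cons.prems(3,5) aL bL unfolding R1_def by auto
  have cl: "R1\<^sup>* = addR (R\<^sup>*) (emb a) (emb b)" unfolding R1_def by (rule rtrancl_add_edge[OF Cons.prems(2)])
  have P1: "\<forall>u\<in>Lam. \<forall>v\<in>Lam. addP P a b u v = ((emb u, emb v) \<in> R1\<^sup>*)"
    using Cons.prems(6) aL bL unfolding cl addP_def addR_def by auto
  note ih = Cons.IH[OF Cons.prems(1) sR1 subR1 _ Cons.prems(5) P1]
  have es: "set es \<subseteq> Lam \<times> Lam" using Cons.prems(4) by auto
  have eqR: "R1 \<union> edgesOf emb es \<union> (edgesOf emb es)\<inverse> = R \<union> edgesOf emb (e#es) \<union> (edgesOf emb (e#es))\<inverse>"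
    unfolding R1_def e edgesOf_Cons by auto
  have cnt: "card (V // R\<^sup>*) = card (V // R1\<^sup>*) + (if (emb a, emb b) \<in> R\<^sup>* then 0 else 1)"
    unfolding R1_def
    by (rule card_quot_add[OF Cons.prems(1,2,3)]) (use Cons.prems(5) aL bL in auto)
  have Pab: "P a b = ((emb a, emb b) \<in> R\<^sup>*)" using Cons.prems(6) aL bL by auto
  show ?case using ih[OF es] eqR cnt Pab e by simp
qed

definition emb :: "nat \<Rightarrow> nat\<times>nat \<Rightarrow> nat\<times>nat" where
  "emb j u = (if fst u = 0 then 0 else if fst u = 1 then j else Suc j, snd u)"

lemma set3: "{1..3::nat} = {1,2,3}" by auto

lemma cv: "{((j,p),(j',p)) | p::nat. p \<in> {1,2,3}} = {((j,1),(j',1)),((j,2),(j',2)),((j,3),(j',3))}"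
  by blast

lemma ch1: "{((j,p),(j',p)) | p::nat. p \<in> {1,2,3} \<and> p \<noteq> 1 \<and> p \<noteq> 1+1} = {((j,3),(j',3))}"
  by auto
lemma ch2: "{((j,p),(j',p)) | p::nat. p \<in> {1,2,3} \<and> p \<noteq> 2 \<and> p \<noteq> 2+1} = {((j,1),(j',1))}"
  by auto

lemma cross_gen:
  assumes "i = 1 \<or> i = 2" "j' = (j+1) mod L"
  shows "crossing_edges 3 L j i b =
     (if b then {((j,1),(j',1)),((j,2),(j',2)),((j,3),(j',3))}
      else {((j,i),(j,i+1)),((j',i),(j',i+1)),((j,qq i),(j',qq i))})"
proof (cases b)
  case True
  then show ?thesis unfolding crossing_edges_def set3 assms(2)[symmetric] by (simp only: cv if_True)
next
  case False
  from assms(1) show ?thesis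
  proof
    assume i: "i = 1"
    show ?thesis unfolding crossing_edges_def set3 assms(2)[symmetric] i using False
      by (simp only: ch1 if_False qq_def if_True) auto
  next
    assume i: "i = 2"
    show ?thesis unfolding crossing_edges_def set3 assms(2)[symmetric] i using False
      by (simp only: ch2 if_False qq_def) auto
  qed
qed

lemma cross_A:
  assumes "Suc j < L" "i = 1 \<or> i = 2"
  shows "crossing_edges 3 L j i b = edgesOf (emb j) (esA i b)"
proof -
  have m: "Suc j = (j+1) mod L" using assms(1) by simp
  show ?thesis unfolding cross_gen[OF assms(2) m]
    using assms(2) by (cases b; elim disjE; simp add: edgesOf_def esA_def emb_def qq_def insert_commute)
qed

lemma cross_F:
  assumes "Suc j = L" "i = 1 \<or> i = 2"
  shows "crossing_edges 3 L j i b = edgesOf (emb j) (esF i b)"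
proof -
  have m: "0 = (j+1) mod L" using assms(1) by simp
  show ?thesis unfolding cross_gen[OF assms(2) m]
    using assms(2) by (cases b; elim disjE; simp add: edgesOf_def esF_def emb_def qq_def insert_commute)
qed

lemma iso:
  assumes "\<forall>(a,b)\<in>R. a \<noteq> x \<and> b \<noteq> x" "(x,y) \<in> R\<^sup>*"
  shows "y = x"
  using assms(2) by (rule converse_rtranclE) (use assms(1) in auto)

definition lt :: "braid_word \<Rightarrow> nat \<Rightarrow> nat" where "lt w j = nat \<bar>w!j\<bar>"

definition Ej :: "braid_word \<Rightarrow> nat set \<Rightarrow> nat \<Rightarrow> ((nat\<times>nat)\<times>(nat\<times>nat)) set" where
  "Ej w S j = (\<Union>j'\<in>{0..<j}. crossing_edges 3 (length w) j' (lt w j') (j'\<in>S))"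

definition Kj :: "braid_word \<Rightarrow> nat set \<Rightarrow> nat \<Rightarrow> ((nat\<times>nat)\<times>(nat\<times>nat)) set" where
  "Kj w S j = (Ej w S j \<union> (Ej w S j)\<inverse>)\<^sup>*"

fun stepDL :: "tl \<times> nat \<Rightarrow> nat \<times> bool \<Rightarrow> tl \<times> nat" where
  "stepDL (D,l) (i,b) = (fst (stepD D i b), l + snd (stepD D i b))"

definition run :: "tl \<times> nat \<Rightarrow> (nat \<times> bool) list \<Rightarrow> tl \<times> nat" where
  "run = foldl stepDL"

definition pfx :: "braid_word \<Rightarrow> nat set \<Rightarrow> nat \<Rightarrow> (nat \<times> bool) list" where
  "pfx w S j = map (\<lambda>j'. (lt w j', j'\<in>S)) [0..<j]"

definition Lam :: "(nat\<times>nat) set" where "Lam = {0,1,2} \<times> {1,2,3}"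

context
  fixes w :: braid_word and S :: "nat set"
  assumes wl: "\<forall>x\<in>set w. x = 1 \<or> x = 2" and L2: "2 \<le> length w"
begin

lemma lt12: "j < length w \<Longrightarrow> lt w j = 1 \<or> lt w j = 2"
  using wl nth_mem[of j w] unfolding lt_def by fastforce

lemma Vdef: "diag_points 3 w = {0..<length w} \<times> {1..3}"
  using L2 by (auto simp: diag_points_def levels_def)

lemma Vfin: "finite (diag_points 3 w)" by (simp add: Vdef)

lemma Ecr_sub:
  assumes "j < length w"
  shows "crossing_edges 3 (length w) j (lt w j) b \<subseteq> diag_points 3 w \<times> diag_points 3 w"
proof -
  have "0 < length w" using assms by (simp del: length_greater_0_conv)
  then have "(j+1) mod length w < length w" by simp
  then show ?thesis unfolding cross_gen[OF lt12[OF assms] refl] Vdef using lt12[OF assms] assms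
    by (auto simp: qq_def)
qed

lemma Ej_sub: "j \<le> length w \<Longrightarrow> Ej w S j \<subseteq> diag_points 3 w \<times> diag_points 3 w"
  unfolding Ej_def by (rule UN_least, rule Ecr_sub) auto

lemma Ej_low:
  assumes "j < length w" "(x,y) \<in> Ej w S j"
  shows "fst x \<le> j \<and> fst y \<le> j"
proof -
  obtain j' where j': "j' < j" "(x,y) \<in> crossing_edges 3 (length w) j' (lt w j') (j'\<in>S)"
    using assms(2) unfolding Ej_def by auto
  have m: "Suc j' = (j'+1) mod length w" using j' assms(1) by simp
  have jl: "j' < length w" using j' assms(1) by simp
  have "(x,y) \<in> (if j'\<in>S then {((j',1),(Suc j',1)),((j',2),(Suc j',2)),((j',3),(Suc j',3))}
      else {((j',lt w j'),(j',lt w j'+1)),((Suc j',lt w j'),(Suc j',lt w j'+1)),((j',qq (lt w j')),(Suc j',qq (lt w j')))})"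
    using j'(2) cross_gen[OF lt12[OF jl] m] by simp
  then show ?thesis using j'(1) by (auto split: if_splits)
qed

lemma Ej_Suc:
  assumes "j < length w"
  shows "Ej w S (Suc j) = Ej w S j \<union> crossing_edges 3 (length w) j (lt w j) (j\<in>S)"
  unfolding Ej_def by (simp add: atLeast0_lessThan_Suc Un_commute)

lemma symK: "(x,y) \<in> (R \<union> R\<inverse>)\<^sup>* \<Longrightarrow> (y,x) \<in> (R \<union> R\<inverse>)\<^sup>*"
  by (metis converse_Un converse_converse converse_iff rtrancl_converse sup_commute)

lemma inv:
  "j < length w \<Longrightarrow>
   (\<forall>u\<in>Lam0. \<forall>v\<in>Lam0. relD (fst (run (TI,0) (pfx w S j))) u v = ((emb j u, emb j v) \<in> Kj w S j))
   \<and> card (diag_points 3 w // Kj w S j) = 3*(length w - 1 - j) + 3 + snd (run (TI,0) (pfx w S j))"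
proof (induction j)
  case 0
  have E0: "Ej w S 0 = {}" by (simp add: Ej_def)
  then have K0: "Kj w S 0 = Id" by (simp add: Kj_def)
  have r0: "run (TI,0) (pfx w S 0) = (TI,0)" by (simp add: run_def pfx_def)
  have rel: "\<forall>u\<in>Lam0. \<forall>v\<in>Lam0. relD TI u v = ((emb 0 u, emb 0 v) \<in> Id)"
    using check_init by (auto simp: emb_def Lam0_def)
  have q: "diag_points 3 w // Id = (\<lambda>x. {x}) ` diag_points 3 w" by (auto simp: quotient_def)
  have "card (diag_points 3 w // Id) = card (diag_points 3 w)" unfolding q
    by (rule card_image) (simp add: inj_on_def)
  moreover have "card (diag_points 3 w) = 3 * length w" by (simp add: Vdef)
  ultimately show ?case using rel K0 r0 L2 by simp
next
  case (Suc j)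
  let ?L = "length w"
  let ?V = "diag_points 3 w"
  have jL: "j < ?L" "Suc j < ?L" using Suc.prems by auto
  obtain D l where Dl: "run (TI,0) (pfx w S j) = (D,l)" by (cases "run (TI,0) (pfx w S j)")
  note IH = Suc.IH[OF jL(1), unfolded Dl fst_conv snd_conv]
  define i where "i = lt w j"
  define b where "b = (j \<in> S)"
  have i12: "i = 1 \<or> i = 2" using lt12[OF jL(1)] i_def by simp
  define R where "R = Ej w S j \<union> (Ej w S j)\<inverse>"
  define es where "es = esA i b"
  have KR: "Kj w S j = R\<^sup>*" by (simp add: Kj_def R_def)
  have symR: "sym R" unfolding R_def sym_def by auto
  have subR: "R \<subseteq> ?V \<times> ?V" using Ej_sub[of j] jL unfolding R_def by auto
  have esL: "set es \<subseteq> Lam \<times> Lam" using i12 unfolding es_def esA_def Lam_def qq_def by auto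
  have embL: "emb j ` Lam \<subseteq> ?V" using jL unfolding Lam_def Vdef emb_def by auto
  have lowR: "fst x \<le> j \<and> fst y \<le> j" if "(x,y) \<in> R" for x y
  proof -
    from that have "(x,y)\<in>Ej w S j \<or> (y,x)\<in>Ej w S j" by (simp add: R_def)
    then show ?thesis
    proof
      assume "(x,y)\<in>Ej w S j" then show ?thesis using Ej_low[OF jL(1)] by simp
    next
      assume "(y,x)\<in>Ej w S j" then have "fst y \<le> j \<and> fst x \<le> j" using Ej_low[OF jL(1)] by simp
      then show ?thesis by simp
    qed
  qed
  have isoK: "y = x" if "(x,y) \<in> R\<^sup>*" "fst x > j" for x y
  proof (rule iso[OF _ that(1)])
    show "\<forall>(a, c)\<in>R. a \<noteq> x \<and> c \<noteq> x"
    proof (intro ballI)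
      fix p assume "p \<in> R"
      then obtain a c where p: "p = (a,c)" "(a,c) \<in> R" by (cases p) auto
      have "fst a \<le> j" "fst c \<le> j" using lowR[OF p(2)] by auto
      then show "case p of (a, c) \<Rightarrow> a \<noteq> x \<and> c \<noteq> x" using p(1) that(2) by auto
    qed
  qed
  have symRs: "(y,x) \<in> R\<^sup>*" if "(x,y) \<in> R\<^sup>*" for x y using symK[of x y "Ej w S j"] that unfolding R_def by simp
  have hyp: "\<forall>u\<in>Lam. \<forall>v\<in>Lam. Pext D u v = ((emb j u, emb j v) \<in> R\<^sup>*)"
  proof (intro ballI)
    fix u v assume u: "u \<in> Lam" and v: "v \<in> Lam"
    show "Pext D u v = ((emb j u, emb j v) \<in> R\<^sup>*)"
    proof (cases "fst u = 2 \<or> fst v = 2")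
      case True
      have fu: "fst u = 0 \<or> fst u = 1 \<or> fst u = 2" using u unfolding Lam_def by auto
      have fv: "fst v = 0 \<or> fst v = 1 \<or> fst v = 2" using v unfolding Lam_def by auto
      have fe: "fst (emb j u) = fst (emb j v) \<Longrightarrow> fst u = fst v"
        using True fu fv unfolding emb_def by (elim disjE) simp_all
      have se: "snd (emb j u) = snd u" "snd (emb j v) = snd v" by (simp_all add: emb_def)
      have inj: "(emb j u = emb j v) = (u = v)"
      proof
        assume "emb j u = emb j v"
        then show "u = v" using fe se by (simp add: prod_eq_iff)
      qed simp
      have "((emb j u, emb j v) \<in> R\<^sup>*) = (emb j u = emb j v)"
      proof
        assume h: "(emb j u, emb j v) \<in> R\<^sup>*"
        show "emb j u = emb j v"
        proof (cases "fst u = 2")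
          case True
          then show ?thesis using isoK[OF h] by (simp add: emb_def)
        next
          case False
          then have "fst v = 2" using \<open>fst u = 2 \<or> fst v = 2\<close> by simp
          then show ?thesis using isoK[OF symRs[OF h]] by (simp add: emb_def)
        qed
      qed simp
      then show ?thesis using True inj unfolding Pext_def by simp
    next
      case False
      then have "u \<in> Lam0" "v \<in> Lam0" using u v unfolding Lam_def Lam0_def by auto
      then show ?thesis using conjunct1[OF IH] False unfolding Pext_def KR by simp
    qed
  qed
  note P = proc[OF Vfin symR subR esL embL hyp]
  have Enew: "Ej w S (Suc j) = Ej w S j \<union> edgesOf (emb j) es"
    unfolding Ej_Suc[OF jL(1)] es_def i_def b_def using cross_A[OF jL(2) lt12[OF jL(1)]] by simp
  have Knew: "Kj w S (Suc j) = (R \<union> edgesOf (emb j) es \<union> (edgesOf (emb j) es)\<inverse>)\<^sup>*"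
    unfolding Kj_def Enew R_def by (simp add: converse_Un Un_ac)
  have rnew: "run (TI,0) (pfx w S (Suc j)) = (fst (stepD D i b), l + snd (stepD D i b))"
    using Dl unfolding run_def pfx_def i_def b_def by simp
  have ren_emb: "emb j (ren u) = emb (Suc j) u" if "u \<in> Lam0" for u
    using that unfolding Lam0_def ren_def emb_def by auto
  have renL: "ren u \<in> Lam" if "u \<in> Lam0" for u
    using that unfolding Lam0_def ren_def Lam_def by auto
  have rel': "\<forall>u\<in>Lam0. \<forall>v\<in>Lam0. relD (fst (stepD D i b)) u v = ((emb (Suc j) u, emb (Suc j) v) \<in> Kj w S (Suc j))"
  proof (intro ballI)
    fix u v assume u: "u \<in> Lam0" and v: "v \<in> Lam0"
    have "relD (fst (stepD D i b)) u v = absE (Pext D) es (ren u) (ren v)"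
      using check_step_i[OF i12] u v unfolding es_def by blast
    also have "\<dots> = ((emb j (ren u), emb j (ren v)) \<in> Kj w S (Suc j))"
      using conjunct1[OF P] renL[OF u] renL[OF v] unfolding Knew by blast
    finally show "relD (fst (stepD D i b)) u v = ((emb (Suc j) u, emb (Suc j) v) \<in> Kj w S (Suc j))"
      using ren_emb[OF u] ren_emb[OF v] by simp
  qed
  have c1: "card (?V // R\<^sup>*) = card (?V // Kj w S (Suc j)) + mergeC (Pext D) es"
    using conjunct2[OF P] unfolding Knew .
  have c2: "mergeC (Pext D) es + snd (stepD D i b) = 3" using check_merge[OF i12] unfolding es_def .
  have c3: "card (?V // R\<^sup>*) = 3 * (?L - 1 - j) + 3 + l" using IH KR by simp
  have "card (?V // Kj w S (Suc j)) = 3 * (?L - 1 - Suc j) + 3 + (l + snd (stepD D i b))"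
    using c1 c2 c3 jL by simp
  then show ?case using rel' rnew by simp
qed

lemma state_edges_Ej: "state_edges 3 w S = Ej w S (length w)"
  using L2 unfolding state_edges_def Ej_def levels_def lt_def by auto

lemma loops:
  "state_loops 3 w S = snd (run (TI,0) (pfx w S (length w - 1)))
      + closeD (fst (run (TI,0) (pfx w S (length w - 1)))) (lt w (length w - 1)) (length w - 1 \<in> S)"
proof -
  let ?L = "length w"
  let ?V = "diag_points 3 w"
  define j where "j = ?L - 1"
  have jL: "j < ?L" "Suc j = ?L" using L2 j_def by auto
  obtain D l where Dl: "run (TI,0) (pfx w S j) = (D,l)" by (cases "run (TI,0) (pfx w S j)")
  note I = inv[OF jL(1), unfolded Dl fst_conv snd_conv]
  define i where "i = lt w j"
  define b where "b = (j \<in> S)"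
  have i12: "i = 1 \<or> i = 2" using lt12[OF jL(1)] i_def by simp
  define R where "R = Ej w S j \<union> (Ej w S j)\<inverse>"
  define es where "es = esF i b"
  have KR: "Kj w S j = R\<^sup>*" by (simp add: Kj_def R_def)
  have symR: "sym R" unfolding R_def sym_def by auto
  have subR: "R \<subseteq> ?V \<times> ?V" using Ej_sub[of j] jL unfolding R_def by auto
  have esL: "set es \<subseteq> Lam0 \<times> Lam0" using i12 unfolding es_def esF_def Lam0_def qq_def by auto
  have embL: "emb j ` Lam0 \<subseteq> ?V" using jL unfolding Lam0_def Vdef emb_def by auto
  have hyp: "\<forall>u\<in>Lam0. \<forall>v\<in>Lam0. relD D u v = ((emb j u, emb j v) \<in> R\<^sup>*)"
    using conjunct1[OF I] KR by simp
  note P = proc[OF Vfin symR subR esL embL hyp]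
  have Enew: "Ej w S ?L = Ej w S j \<union> edgesOf (emb j) es"
  proof -
    have e: "Ej w S ?L = Ej w S (Suc j)" using jL(2) by simp
    show ?thesis unfolding e Ej_Suc[OF jL(1)] es_def i_def b_def
      using cross_F[OF jL(2) lt12[OF jL(1)]] by simp
  qed
  have Knew: "(state_edges 3 w S \<union> (state_edges 3 w S)\<inverse>)\<^sup>* = (R \<union> edgesOf (emb j) es \<union> (edgesOf (emb j) es)\<inverse>)\<^sup>*"
    unfolding state_edges_Ej Enew R_def by (simp add: converse_Un Un_ac)
  have c1: "card (?V // R\<^sup>*) = state_loops 3 w S + mergeC (relD D) es"
    using conjunct2[OF P] unfolding state_loops_def Knew .
  have c2: "mergeC (relD D) es + closeD D i b = 3" using check_close[OF i12] unfolding es_def .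
  have c3: "card (?V // R\<^sup>*) = 3 * (?L - 1 - j) + 3 + l" using conjunct2[OF I] KR by simp
  show ?thesis using c1 c2 c3 Dl j_def i_def b_def by simp
qed

end

definition wt :: "real \<Rightarrow> bool \<Rightarrow> real" where "wt A b = (if b then A else inverse A)"
definition dd :: "real \<Rightarrow> real" where "dd A = - A\<^sup>2 - inverse A ^ 2"

fun G :: "tl \<Rightarrow> (nat \<times> bool) list \<Rightarrow> nat" where
  "G D [] = 0"
| "G D [(i,b)] = closeD D i b"
| "G D ((i,b)#x#xs) = snd (stepD D i b) + G (fst (stepD D i b)) (x#xs)"

fun Tr :: "real \<Rightarrow> tl \<Rightarrow> nat list \<Rightarrow> real" where
  "Tr A D [] = 0"
| "Tr A D [i] = wt A True * dd A ^ closeD D i True + wt A False * dd A ^ closeD D i False"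
| "Tr A D (i#j#is) = wt A True * dd A ^ snd (stepD D i True) * Tr A (fst (stepD D i True)) (j#is)
                    + wt A False * dd A ^ snd (stepD D i False) * Tr A (fst (stepD D i False)) (j#is)"

lemma G_Cons: "xs \<noteq> [] \<Longrightarrow> G D ((i,b)#xs) = snd (stepD D i b) + G (fst (stepD D i b)) xs"
  by (cases xs) auto

lemma run_acc: "run (D,l) ys = (fst (run (D,0) ys), l + snd (run (D,0) ys))"
proof (induction ys arbitrary: D l)
  case Nil then show ?case by (simp add: run_def)
next
  case (Cons y ys)
  obtain i b where y: "y = (i,b)" by (cases y)
  have "run (D,l) (y#ys) = run (fst (stepD D i b), l + snd (stepD D i b)) ys" by (simp add: run_def y)
  also have "\<dots> = (fst (run (fst (stepD D i b),0) ys), l + snd (stepD D i b) + snd (run (fst (stepD D i b),0) ys))"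
    by (rule Cons.IH)
  finally show ?case using Cons.IH[of "fst (stepD D i b)" "snd (stepD D i b)"] by (simp add: run_def y)
qed

lemma G_snoc: "G D (ys @ [(i,b)]) = snd (run (D,0) ys) + closeD (fst (run (D,0) ys)) i b"
proof (induction ys arbitrary: D)
  case Nil then show ?case by (simp add: run_def)
next
  case (Cons y ys)
  obtain i' b' where y: "y = (i',b')" by (cases y)
  have "G D ((y#ys) @ [(i,b)]) = snd (stepD D i' b') + G (fst (stepD D i' b')) (ys @ [(i,b)])"
    unfolding y by (simp add: G_Cons)
  also have "\<dots> = snd (run (D,0) (y#ys)) + closeD (fst (run (D,0) (y#ys))) i b"
    using Cons.IH run_acc[of "fst (stepD D i' b')" "snd (stepD D i' b')" ys]
    by (simp add: run_def y)
  finally show ?case .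
qed

lemma closeD_pos: "closeD D i b \<ge> 1" by (cases D) (auto simp: closeD_def)

lemma G_pos: "xs \<noteq> [] \<Longrightarrow> G D xs \<ge> 1"
proof (induction xs arbitrary: D)
  case Nil then show ?case by simp
next
  case (Cons x xs)
  obtain i b where x: "x = (i,b)" by (cases x)
  show ?case
  proof (cases "xs = []")
    case True then show ?thesis using closeD_pos x by simp
  next
    case False
    have "1 \<le> G (fst (stepD D i b)) xs" by (rule Cons.IH[OF False])
    then show ?thesis using x False by (simp add: G_Cons)
  qed
qed

lemma lists_Suc: "{bs :: bool list. length bs = Suc n} = Cons True ` {bs. length bs = n} \<union> Cons False ` {bs. length bs = n}"
  by (auto simp: length_Suc_conv)

lemma fin_lists: "finite {bs :: bool list. length bs = n}"
  using finite_lists_length_eq[of "UNIV :: bool set" n] by simp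

lemma sum_lists_Suc:
  "(\<Sum>bs\<in>{bs :: bool list. length bs = Suc n}. f bs)
   = (\<Sum>bs\<in>{bs. length bs = n}. f (True#bs)) + (\<Sum>bs\<in>{bs. length bs = n}. f (False#bs))"
proof -
  have "(\<Sum>bs\<in>{bs :: bool list. length bs = Suc n}. f bs)
      = (\<Sum>bs\<in>Cons True ` {bs. length bs = n}. f bs) + (\<Sum>bs\<in>Cons False ` {bs. length bs = n}. f bs)"
    unfolding lists_Suc by (rule sum.union_disjoint) (auto simp: fin_lists)
  also have "\<dots> = (\<Sum>bs\<in>{bs. length bs = n}. f (True#bs)) + (\<Sum>bs\<in>{bs. length bs = n}. f (False#bs))"
    by (simp add: sum.reindex)
  finally show ?thesis .
qed

lemma sum_Tr:
  "is \<noteq> [] \<Longrightarrow> (\<Sum>bs\<in>{bs. length bs = length is}. prod_list (map (wt A) bs) * dd A ^ G D (zip is bs)) = Tr A D is"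
proof (induction "is" arbitrary: D)
  case Nil then show ?case by simp
next
  case (Cons i "is")
  show ?case
  proof (cases "is = []")
    case True
    have "{bs :: bool list. length bs = 0} = {[]}" by auto
    then show ?thesis using True by (simp add: sum_lists_Suc)
  next
    case False
    have z: "zip (i#is) (b#bs) = (i,b) # zip is bs" for b bs by simp
    have ne: "length bs = length is \<Longrightarrow> zip is bs \<noteq> []" for bs using False by (cases "is"; cases bs) auto
    have "(\<Sum>bs\<in>{bs. length bs = length (i#is)}. prod_list (map (wt A) bs) * dd A ^ G D (zip (i#is) bs))
      = (\<Sum>bs\<in>{bs. length bs = length is}. wt A True * dd A ^ snd (stepD D i True) * (prod_list (map (wt A) bs) * dd A ^ G (fst (stepD D i True)) (zip is bs)))
      + (\<Sum>bs\<in>{bs. length bs = length is}. wt A False * dd A ^ snd (stepD D i False) * (prod_list (map (wt A) bs) * dd A ^ G (fst (stepD D i False)) (zip is bs)))"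
      unfolding length_Cons sum_lists_Suc z
      by (intro arg_cong2[where f="(+)"] sum.cong refl; simp only: mem_Collect_eq; frule ne; simp add: G_Cons power_add)
    also have "\<dots> = wt A True * dd A ^ snd (stepD D i True) * Tr A (fst (stepD D i True)) is
        + wt A False * dd A ^ snd (stepD D i False) * Tr A (fst (stepD D i False)) is"
      by (simp add: sum_distrib_left[symmetric] Cons.IH[OF False])
    also have "\<dots> = Tr A D (i#is)"
      using False by (cases "is") simp_all
    finally show ?thesis .
  qed
qed

lemma zip_map_upt: "zip (map f [0..<n]) (map g [0..<n]) = map (\<lambda>j. (f j, g j)) [0..<n]"
  by (rule nth_equalityI) auto

lemma kb_Tr:
  assumes wl: "\<forall>x\<in>set w. x = 1 \<or> x = 2" and L2: "2 \<le> length w" and A: "A > 0"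
  shows "kauffman_bracket 3 w A = Tr A TI (map (lt w) [0..<length w]) / dd A"
proof -
  let ?L = "length w"
  let ?lts = "map (lt w) [0..<?L]"
  define F where "F bs = prod_list (map (wt A) bs) * dd A ^ G TI (zip ?lts bs)" for bs
  have ddnz: "dd A \<noteq> 0"
  proof -
    have "A\<^sup>2 > 0" "inverse A ^ 2 > 0" using A by simp_all
    then have "dd A < 0" unfolding dd_def by linarith
    then show ?thesis by simp
  qed
  have trm: "(\<Prod>j\<in>{0..<?L}. if (j \<in> S) = (w ! j > 0) then A else inverse A)
        * (- A\<^sup>2 - inverse A ^ 2) ^ (state_loops 3 w S - 1) = F (map (\<lambda>j. j\<in>S) [0..<?L]) / dd A" for S
  proof -
    have pos: "w ! j > 0" if "j < ?L" for j
    proof -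
      have "w!j \<in> set w" using that by simp
      then have "w!j = 1 \<or> w!j = 2" using wl by blast
      then show ?thesis by auto
    qed
    have "(\<Prod>j\<in>{0..<?L}. if (j \<in> S) = (w ! j > 0) then A else inverse A) = (\<Prod>j\<in>{0..<?L}. wt A (j\<in>S))"
      by (rule prod.cong) (auto simp: wt_def pos)
    also have "\<dots> = prod_list (map (wt A) (map (\<lambda>j. j\<in>S) [0..<?L]))"
      using prod.distinct_set_conv_list[of "[0..<?L]" "\<lambda>j. wt A (j\<in>S)"] by (simp add: comp_def)
    finally have p: "(\<Prod>j\<in>{0..<?L}. if (j \<in> S) = (w ! j > 0) then A else inverse A)
        = prod_list (map (wt A) (map (\<lambda>j. j\<in>S) [0..<?L]))" .
    have LS: "Suc (?L - 1) = ?L" using L2 by simp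
    have up: "[0..<?L] = [0..<?L - 1] @ [?L - 1]"
      using upt_Suc_append[of 0 "?L - 1"] unfolding LS by simp
    have z: "zip ?lts (map (\<lambda>j. j\<in>S) [0..<?L]) = pfx w S (?L - 1) @ [(lt w (?L - 1), ?L - 1 \<in> S)]"
      unfolding zip_map_upt pfx_def by (subst up) simp
    have sl: "state_loops 3 w S = G TI (zip ?lts (map (\<lambda>j. j\<in>S) [0..<?L]))"
      unfolding z G_snoc using loops[OF wl L2] by simp
    have ne: "zip ?lts (map (\<lambda>j. j\<in>S) [0..<?L]) \<noteq> []" proof -
      have "w \<noteq> []" using L2 by (cases w) auto
      then show ?thesis by (simp add: zip_map_upt)
    qed
    have g1: "state_loops 3 w S \<ge> 1" unfolding sl by (rule G_pos[OF ne])
    obtain n where n: "state_loops 3 w S = Suc n" using g1 by (cases "state_loops 3 w S") auto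
    have dpow: "dd A ^ (state_loops 3 w S - 1) = dd A ^ state_loops 3 w S / dd A"
      unfolding n using ddnz by simp
    show ?thesis unfolding dd_def[symmetric] unfolding dpow unfolding p F_def sl by simp
  qed
  have "kauffman_bracket 3 w A = (\<Sum>S\<in>Pow {0..<?L}. F (map (\<lambda>j. j\<in>S) [0..<?L])) / dd A"
    unfolding kauffman_bracket_def trm by (simp add: sum_divide_distrib)
  also have "(\<Sum>S\<in>Pow {0..<?L}. F (map (\<lambda>j. j\<in>S) [0..<?L])) = (\<Sum>bs\<in>{bs. length bs = ?L}. F bs)"
  proof (rule sum.reindex_bij_witness[where i="\<lambda>bs. {j. j < ?L \<and> bs!j}" and j="\<lambda>S. map (\<lambda>j. j\<in>S) [0..<?L]"])
    fix S assume "S \<in> Pow {0..<?L}"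
    then show "{j. j < ?L \<and> map (\<lambda>j. j \<in> S) [0..<?L] ! j} = S" by auto
  next
    fix S assume "S \<in> Pow {0..<?L}"
    then show "map (\<lambda>j. j \<in> S) [0..<?L] \<in> {bs. length bs = ?L}" by simp
  next
    fix bs :: "bool list" assume "bs \<in> {bs. length bs = ?L}"
    then show "map (\<lambda>j. j \<in> {j. j < ?L \<and> bs ! j}) [0..<?L] = bs" by (intro nth_equalityI) auto
  next
    fix bs :: "bool list" assume "bs \<in> {bs. length bs = ?L}"
    then show "{j. j < ?L \<and> bs ! j} \<in> Pow {0..<?L}" by auto
  qed simp
  also have "\<dots> = Tr A TI ?lts"
  proof -
    have "w \<noteq> []" using L2 by (cases w) auto
    then show ?thesis using sum_Tr[of ?lts A TI] unfolding F_def by simp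
  qed
  finally show ?thesis .
qed

definition ds :: "nat \<Rightarrow> nat list" where "ds m = concat (replicate m [1,2,1])"

definition Co :: "real \<Rightarrow> real \<Rightarrow> real \<Rightarrow> tl \<Rightarrow> real" where
  "Co A X Y D = (case D of
      TI \<Rightarrow> - X * inverse A ^ 3 * (1 + A^4 + A^8 + A^12)
    | T1 \<Rightarrow> Y * inverse A ^ 5 * (1 + A^4)
    | T2 \<Rightarrow> Y * inverse A ^ 5 * (1 + A^4)
    | Ta \<Rightarrow> - Y * inverse A ^ 7 * (1 + 2*A^4 + A^8)
    | Tb \<Rightarrow> - Y * inverse A ^ 7 * (1 + 2*A^4 + A^8))"

definition Ce :: "real \<Rightarrow> real \<Rightarrow> real \<Rightarrow> tl \<Rightarrow> real" where
  "Ce A X Y D = (case D of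
      TI \<Rightarrow> - 2 * Y * (inverse A ^ 8 + inverse A ^ 4) - X * (1 + A^4 + A^8 + A^12)
    | T1 \<Rightarrow> Y * inverse A ^ 10 * (1 + 2*A^4 + A^8)
    | T2 \<Rightarrow> Y * inverse A ^ 10 * (1 + 2*A^4 + A^8)
    | Ta \<Rightarrow> - Y * (inverse A ^ 8 + inverse A ^ 4)
    | Tb \<Rightarrow> - Y * (inverse A ^ 8 + inverse A ^ 4))"

lemma base_TI: "A > 0 \<Longrightarrow> Tr A TI [1,2,1] = Co A 1 1 TI"
proof -
  assume "A > 0" then have h: "A * inverse A = 1" by simp
  show ?thesis
    apply (simp add: Co_def stepD_def closeD_def wt_def dd_def)
    using h by algebra
qed

lemma oe_TI: assumes "A > 0" "\<And>D. Tr A D (y#ys) = Co A X Y D" shows "Tr A TI (1#2#1#y#ys) = Ce A X Y TI"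
proof -
  have h: "A * inverse A = 1" using assms by simp
  show ?thesis
    apply (simp add: assms(2) Co_def Ce_def stepD_def closeD_def wt_def dd_def)
    using h by algebra
qed

lemma eo_TI: assumes "A > 0" "\<And>D. Tr A D (y#ys) = Ce A X Y D" shows "Tr A TI (1#2#1#y#ys) = Co A (X * A^6) (Y * inverse A ^ 6) TI"
proof -
  have h: "A * inverse A = 1" using assms by simp
  show ?thesis
    apply (simp add: assms(2) Co_def Ce_def stepD_def closeD_def wt_def dd_def)
    using h by algebra
qed

lemma base_T1: "A > 0 \<Longrightarrow> Tr A T1 [1,2,1] = Co A 1 1 T1"
proof -
  assume "A > 0" then have h: "A * inverse A = 1" by simp
  show ?thesis
    apply (simp add: Co_def stepD_def closeD_def wt_def dd_def)
    using h by algebra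
qed

lemma oe_T1: assumes "A > 0" "\<And>D. Tr A D (y#ys) = Co A X Y D" shows "Tr A T1 (1#2#1#y#ys) = Ce A X Y T1"
proof -
  have h: "A * inverse A = 1" using assms by simp
  show ?thesis
    apply (simp add: assms(2) Co_def Ce_def stepD_def closeD_def wt_def dd_def)
    using h by algebra
qed

lemma eo_T1: assumes "A > 0" "\<And>D. Tr A D (y#ys) = Ce A X Y D" shows "Tr A T1 (1#2#1#y#ys) = Co A (X * A^6) (Y * inverse A ^ 6) T1"
proof -
  have h: "A * inverse A = 1" using assms by simp
  show ?thesis
    apply (simp add: assms(2) Co_def Ce_def stepD_def closeD_def wt_def dd_def)
    using h by algebra
qed

lemma base_T2: "A > 0 \<Longrightarrow> Tr A T2 [1,2,1] = Co A 1 1 T2"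
proof -
  assume "A > 0" then have h: "A * inverse A = 1" by simp
  show ?thesis
    apply (simp add: Co_def stepD_def closeD_def wt_def dd_def)
    using h by algebra
qed

lemma oe_T2: assumes "A > 0" "\<And>D. Tr A D (y#ys) = Co A X Y D" shows "Tr A T2 (1#2#1#y#ys) = Ce A X Y T2"
proof -
  have h: "A * inverse A = 1" using assms by simp
  show ?thesis
    apply (simp add: assms(2) Co_def Ce_def stepD_def closeD_def wt_def dd_def)
    using h by algebra
qed

lemma eo_T2: assumes "A > 0" "\<And>D. Tr A D (y#ys) = Ce A X Y D" shows "Tr A T2 (1#2#1#y#ys) = Co A (X * A^6) (Y * inverse A ^ 6) T2"
proof -
  have h: "A * inverse A = 1" using assms by simp
  show ?thesis
    apply (simp add: assms(2) Co_def Ce_def stepD_def closeD_def wt_def dd_def)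
    using h by algebra
qed

lemma base_Ta: "A > 0 \<Longrightarrow> Tr A Ta [1,2,1] = Co A 1 1 Ta"
proof -
  assume "A > 0" then have h: "A * inverse A = 1" by simp
  show ?thesis
    apply (simp add: Co_def stepD_def closeD_def wt_def dd_def)
    using h by algebra
qed

lemma oe_Ta: assumes "A > 0" "\<And>D. Tr A D (y#ys) = Co A X Y D" shows "Tr A Ta (1#2#1#y#ys) = Ce A X Y Ta"
proof -
  have h: "A * inverse A = 1" using assms by simp
  show ?thesis
    apply (simp add: assms(2) Co_def Ce_def stepD_def closeD_def wt_def dd_def)
    using h by algebra
qed

lemma eo_Ta: assumes "A > 0" "\<And>D. Tr A D (y#ys) = Ce A X Y D" shows "Tr A Ta (1#2#1#y#ys) = Co A (X * A^6) (Y * inverse A ^ 6) Ta"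
proof -
  have h: "A * inverse A = 1" using assms by simp
  show ?thesis
    apply (simp add: assms(2) Co_def Ce_def stepD_def closeD_def wt_def dd_def)
    using h by algebra
qed

lemma base_Tb: "A > 0 \<Longrightarrow> Tr A Tb [1,2,1] = Co A 1 1 Tb"
proof -
  assume "A > 0" then have h: "A * inverse A = 1" by simp
  show ?thesis
    apply (simp add: Co_def stepD_def closeD_def wt_def dd_def)
    using h by algebra
qed

lemma oe_Tb: assumes "A > 0" "\<And>D. Tr A D (y#ys) = Co A X Y D" shows "Tr A Tb (1#2#1#y#ys) = Ce A X Y Tb"
proof -
  have h: "A * inverse A = 1" using assms by simp
  show ?thesis
    apply (simp add: assms(2) Co_def Ce_def stepD_def closeD_def wt_def dd_def)
    using h by algebra
qed

lemma eo_Tb: assumes "A > 0" "\<And>D. Tr A D (y#ys) = Ce A X Y D" shows "Tr A Tb (1#2#1#y#ys) = Co A (X * A^6) (Y * inverse A ^ 6) Tb"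
proof -
  have h: "A * inverse A = 1" using assms by simp
  show ?thesis
    apply (simp add: assms(2) Co_def Ce_def stepD_def closeD_def wt_def dd_def)
    using h by algebra
qed

lemma Tr_base:
  assumes "A > 0" shows "Tr A D [1,2,1] = Co A 1 1 D"
  using assms by (cases D) (simp_all only: base_TI base_T1 base_T2 base_Ta base_Tb)

lemma step_oe:
  assumes "A > 0" "\<And>D. Tr A D (y#ys) = Co A X Y D"
  shows "Tr A D (1#2#1#y#ys) = Ce A X Y D"
  by (cases D) (simp_all only: oe_TI[OF assms] oe_T1[OF assms] oe_T2[OF assms] oe_Ta[OF assms] oe_Tb[OF assms])

lemma step_eo:
  assumes "A > 0" "\<And>D. Tr A D (y#ys) = Ce A X Y D"
  shows "Tr A D (1#2#1#y#ys) = Co A (X * A^6) (Y * inverse A ^ 6) D"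
  by (cases D) (simp_all only: eo_TI[OF assms] eo_T1[OF assms] eo_T2[OF assms] eo_Ta[OF assms] eo_Tb[OF assms])

lemma ds_Suc: "ds (Suc m) = 1#2#1#ds m" by (simp add: ds_def)

lemma Tr_ds:
  assumes "A > 0"
  shows "(\<forall>D. Tr A D (ds (2*k+1)) = Co A (A^(6*k)) (inverse A^(6*k)) D)
       \<and> (\<forall>D. Tr A D (ds (2*k+2)) = Ce A (A^(6*k)) (inverse A^(6*k)) D)"
proof (induction k)
  case 0
  have o: "\<forall>D. Tr A D (ds 1) = Co A 1 1 D" using Tr_base[OF assms] by (simp add: ds_def)
  have "Tr A D (ds 2) = Ce A 1 1 D" for D
  proof -
    have o1: "\<And>D. Tr A D [1,2,1] = Co A 1 1 D" using Tr_base[OF assms] .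
    have "Tr A D [1,2,1,1,2,1] = Ce A 1 1 D" using step_oe[OF assms o1] by simp
    moreover have "ds 2 = [1,2,1,1,2,1]" by (simp add: ds_def numeral_2_eq_2)
    ultimately show ?thesis by simp
  qed
  then show ?case using o by (simp add: numeral_2_eq_2)
next
  case (Suc k)
  have e: "\<forall>D. Tr A D (ds (2*k+2)) = Ce A (A^(6*k)) (inverse A^(6*k)) D" using Suc.IH by simp
  have o: "\<forall>D. Tr A D (ds (2*k+1)) = Co A (A^(6*k)) (inverse A^(6*k)) D" using Suc.IH by simp
  have dse: "ds (2*k+2) = 1 # 2 # 1 # ds (2*k+1)" by (simp add: ds_Suc)
  have dso2: "ds (2*Suc k+1) = 1#2#1#ds (2*k+2)" by (simp add: ds_Suc)
  have dse2: "ds (2*Suc k+2) = 1#2#1#ds (2*Suc k+1)" by (simp add: ds_Suc)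
  have pX: "A^(6*Suc k) = A^(6*k) * A^6" "inverse A^(6*Suc k) = inverse A^(6*k) * inverse A^6"
    by (simp_all add: mult_Suc_right power_add)
  obtain y ys where yy: "ds (2*k+2) = y#ys" using dse by blast
  have e2: "\<And>D. Tr A D (y#ys) = Ce A (A^(6*k)) (inverse A^(6*k)) D" using e unfolding yy by blast
  have o': "\<forall>D. Tr A D (ds (2*Suc k+1)) = Co A (A^(6*Suc k)) (inverse A^(6*Suc k)) D"
    unfolding dso2 yy pX using step_eo[OF assms e2] by blast
  obtain z zs where zz: "ds (2*Suc k+1) = z#zs" using dso2 by blast
  have o2: "\<And>D. Tr A D (z#zs) = Co A (A^(6*Suc k)) (inverse A^(6*Suc k)) D" using o' unfolding zz by blast
  have e': "\<forall>D. Tr A D (ds (2*Suc k+2)) = Ce A (A^(6*Suc k)) (inverse A^(6*Suc k)) D"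
    unfolding dse2 zz using step_oe[OF assms o2] by blast
  show ?case using o' e' by blast
qed

lemma bp_ds: "braid_pow Delta3 m = map int (ds m)"
  by (induction m) (simp_all add: braid_pow_def Delta3_def ds_def)

lemma ds_len: "length (ds m) = 3 * m" by (induction m) (simp_all add: ds_def)

lemma ds_set: "x \<in> set (ds m) \<Longrightarrow> x = 1 \<or> x = 2"
  by (induction m) (auto simp: ds_def)

lemma writhe_ds: "writhe (map int (ds m)) = int (3 * m)"
proof (induction m)
  case 0 then show ?case by (simp add: writhe_def ds_def)
next
  case (Suc m)
  have "map int (ds (Suc m)) = [1,2,1] @ map int (ds m)" by (simp add: ds_def)
  then show ?case using Suc by (simp add: writhe_def)
qed

lemma V_ds:
  assumes "m \<ge> 1" "A > 0"
  shows "jones_closure 3 (braid_pow Delta3 m) s' = (let A = s' powr (-1/2) in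
           (- (A ^ 3)) powi (- int (3*m)) * kauffman_bracket 3 (braid_pow Delta3 m) A)"
  unfolding jones_closure_def bp_ds writhe_ds ..

lemma kb_ds:
  assumes "m \<ge> 1" "A > 0"
  shows "kauffman_bracket 3 (braid_pow Delta3 m) A = Tr A TI (ds m) / dd A"
proof -
  let ?w = "braid_pow Delta3 m"
  have wl: "\<forall>x\<in>set ?w. x = 1 \<or> x = 2" unfolding bp_ds using ds_set by fastforce
  have L2: "2 \<le> length ?w" unfolding bp_ds using assms(1) by (simp add: ds_len)
  have lts: "map (lt ?w) [0..<length ?w] = ds m"
    unfolding bp_ds by (rule nth_equalityI) (simp_all add: lt_def)
  show ?thesis using kb_Tr[OF wl L2 assms(2)] unfolding lts .
qed

lemma fin_odd:
  assumes "A > 0"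
  shows "(- (A^3)) powi (- int (3*(2*k+1))) * (Co A (A^(6*k)) (inverse A^(6*k)) TI / dd A)
       = - ((inverse A ^ 2) ^ (6*k+5)) - (inverse A ^ 2) ^ (6*k+1)"
proof -
  define X where "X = A^(6*k)"
  define Y where "Y = inverse A^(6*k)"
  have XY: "X * Y = 1" unfolding X_def Y_def using assms by (simp add: power_mult_distrib[symmetric])
  have h: "A * inverse A = 1" using assms by simp
  have c: "(- (A^3)) powi (- int (3*(2*k+1))) = - (Y^3 * inverse A ^ 9)"
  proof -
    have o: "odd (3*(2*k+1))" by simp
    have "(- (A^3)) powi (- int (3*(2*k+1))) = inverse ((- (A^3)) ^ (3*(2*k+1)))"
      by (simp only: power_int_minus power_int_of_nat)
    also have "\<dots> = - (inverse A ^ (3 * (3*(2*k+1))))"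
      by (simp only: power_minus_odd[OF o] power_mult[symmetric] inverse_minus_eq power_inverse)
    also have "inverse A ^ (3 * (3*(2*k+1))) = Y^3 * inverse A ^ 9"
      unfolding Y_def by (simp add: power_mult[symmetric] power_add[symmetric] algebra_simps)
    finally show ?thesis .
  qed
  have d: "dd A * (- (inverse A ^ 2)) = (1 + A^4) * inverse A ^ 4"
    unfolding dd_def using h by algebra
  have p1: "(inverse A ^ 2) ^ (6*k+5) = Y^2 * inverse A ^ 10" "(inverse A ^ 2) ^ (6*k+1) = Y^2 * inverse A ^ 2"
    unfolding Y_def by (simp_all add: power_mult[symmetric] power_add[symmetric] algebra_simps)
  have ddnz: "dd A \<noteq> 0"
  proof -
    have "A\<^sup>2 > 0" "inverse A ^ 2 > 0" using assms by simp_all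
    then have "dd A < 0" unfolding dd_def by linarith
    then show ?thesis by simp
  qed
  have key: "- (Y^3 * inverse A ^ 9) * Co A X Y TI = (- (Y^2 * inverse A ^ 10) - Y^2 * inverse A ^ 2) * dd A"
    unfolding Co_def dd_def using h XY by (simp; algebra)
  have "- (Y^3 * inverse A ^ 9) * (Co A X Y TI / dd A) = (- (Y^3 * inverse A ^ 9) * Co A X Y TI) / dd A"
    by simp
  also have "\<dots> = ((- (Y^2 * inverse A ^ 10) - Y^2 * inverse A ^ 2) * dd A) / dd A" by (simp only: key)
  also have "\<dots> = - (Y^2 * inverse A ^ 10) - Y^2 * inverse A ^ 2" using ddnz by simp
  finally show ?thesis unfolding c p1 X_def[symmetric] Y_def[symmetric] .
qed

lemma fin_even:
  assumes "A > 0"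
  shows "(- (A^3)) powi (- int (3*(2*k+2))) * (Ce A (A^(6*k)) (inverse A^(6*k)) TI / dd A)
       = 2 * (inverse A ^ 2) ^ (12*k+12) + (inverse A ^ 2) ^ (6*k+8) + (inverse A ^ 2) ^ (6*k+4)"
proof -
  define X where "X = A^(6*k)"
  define Y where "Y = inverse A^(6*k)"
  have XY: "X * Y = 1" unfolding X_def Y_def using assms by (simp add: power_mult_distrib[symmetric])
  have h: "A * inverse A = 1" using assms by simp
  have c: "(- (A^3)) powi (- int (3*(2*k+2))) = Y^3 * inverse A ^ 18"
  proof -
    have o: "even (3*(2*k+2))" by simp
    have "(- (A^3)) powi (- int (3*(2*k+2))) = inverse ((- (A^3)) ^ (3*(2*k+2)))"
      by (simp only: power_int_minus power_int_of_nat)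
    also have "\<dots> = inverse A ^ (3 * (3*(2*k+2)))"
      by (simp only: power_minus_even[OF o] power_mult[symmetric] power_inverse)
    also have "inverse A ^ (3 * (3*(2*k+2))) = Y^3 * inverse A ^ 18"
      unfolding Y_def by (simp add: power_mult[symmetric] power_add[symmetric] algebra_simps)
    finally show ?thesis .
  qed
  have p1: "(inverse A ^ 2) ^ (12*k+12) = Y^4 * inverse A ^ 24" "(inverse A ^ 2) ^ (6*k+8) = Y^2 * inverse A ^ 16"
    "(inverse A ^ 2) ^ (6*k+4) = Y^2 * inverse A ^ 8"
    unfolding Y_def by (simp_all add: power_mult[symmetric] power_add[symmetric] algebra_simps)
  have ddnz: "dd A \<noteq> 0"
  proof -
    have "A\<^sup>2 > 0" "inverse A ^ 2 > 0" using assms by simp_all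
    then have "dd A < 0" unfolding dd_def by linarith
    then show ?thesis by simp
  qed
  have key: "Y^3 * inverse A ^ 18 * Ce A X Y TI = (2 * (Y^4 * inverse A ^ 24) + Y^2 * inverse A ^ 16 + Y^2 * inverse A ^ 8) * dd A"
    unfolding Ce_def dd_def using h XY by (simp; algebra)
  have "Y^3 * inverse A ^ 18 * (Ce A X Y TI / dd A) = (Y^3 * inverse A ^ 18 * Ce A X Y TI) / dd A"
    by simp
  also have "\<dots> = ((2 * (Y^4 * inverse A ^ 24) + Y^2 * inverse A ^ 16 + Y^2 * inverse A ^ 8) * dd A) / dd A" by (simp only: key)
  also have "\<dots> = 2 * (Y^4 * inverse A ^ 24) + Y^2 * inverse A ^ 16 + Y^2 * inverse A ^ 8" using ddnz by simp
  finally show ?thesis unfolding c p1 X_def[symmetric] Y_def[symmetric] .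
qed

lemma empty_case:
  assumes "A > 0"
  shows "kauffman_bracket 3 (braid_pow Delta3 0) A = (- A\<^sup>2 - inverse A ^ 2)\<^sup>2"
proof -
  have w: "braid_pow Delta3 0 = []" by (simp add: braid_pow_def)
  have se: "state_edges 3 [] {} = {}" by (simp add: state_edges_def)
  have dp: "diag_points 3 [] = {(0,1),(0,2),(0,3)}" by (auto simp: diag_points_def levels_def)
  have q: "X // Id = (\<lambda>x. {x}) ` X" for X :: "(nat\<times>nat) set" by (auto simp: quotient_def)
  have cI: "card ((\<lambda>x. {x}) ` X) = card X" for X :: "(nat\<times>nat) set"
    by (rule card_image) (simp add: inj_on_def)
  have sl: "state_loops 3 [] {} = 3" unfolding state_loops_def se by (simp add: q cI dp)
  show ?thesis unfolding w kauffman_bracket_def by (simp add: sl)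
qed

theorem proposition1p5:
  fixes k :: nat and s :: real
  assumes "s > 0"
  shows "V3 (braid_pow Delta3 (2*k)) s
           = 2 * s ^ (12*k) + s ^ (6*k+2) + s powi (6 * int k - 2)
       \<and> V3 (braid_pow Delta3 (2*k+1)) s = - (s ^ (6*k+5)) - s ^ (6*k+1)"
proof -
  define A where "A = s powr (-1/2)"
  have Apos: "A > 0" unfolding A_def using assms by simp
  have A2: "A ^ 2 = inverse s"
  proof -
    have "A ^ 2 = s powr (real 2 * (-1/2))" unfolding A_def using assms by (simp add: powr_power)
    also have "\<dots> = s powr (-1)" by simp
    also have "\<dots> = inverse s" using assms by (simp add: powr_neg_one divide_inverse)
    finally show ?thesis .
  qed
  have sA: "s = inverse A ^ 2" using A2 by (simp add: power_inverse)
  have VA: "V3 w s = (- (A^3)) powi (- writhe w) * kauffman_bracket 3 w A" for w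
    by (simp add: jones_closure_def A_def Let_def)
  have wr: "writhe (braid_pow Delta3 m) = int (3*m)" for m unfolding bp_ds writhe_ds ..
  have odd: "V3 (braid_pow Delta3 (2*k+1)) s = - (s ^ (6*k+5)) - s ^ (6*k+1)"
  proof -
    have "V3 (braid_pow Delta3 (2*k+1)) s
        = (- (A^3)) powi (- int (3*(2*k+1))) * (Tr A TI (ds (2*k+1)) / dd A)"
    proof -
      have kbo: "kauffman_bracket 3 (braid_pow Delta3 (2*k+1)) A = Tr A TI (ds (2*k+1)) / dd A"
        by (rule kb_ds) (simp_all add: Apos)
      show ?thesis unfolding VA wr kbo by simp
    qed
    also have "Tr A TI (ds (2*k+1)) = Co A (A^(6*k)) (inverse A^(6*k)) TI"
      using Tr_ds[OF Apos, of k] by blast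
    also have "(- (A^3)) powi (- int (3*(2*k+1))) * (Co A (A^(6*k)) (inverse A^(6*k)) TI / dd A)
       = - ((inverse A ^ 2) ^ (6*k+5)) - (inverse A ^ 2) ^ (6*k+1)" by (rule fin_odd[OF Apos])
    finally show ?thesis unfolding sA[symmetric] .
  qed
  have even: "V3 (braid_pow Delta3 (2*k)) s = 2 * s ^ (12*k) + s ^ (6*k+2) + s powi (6 * int k - 2)"
  proof (cases k)
    case 0
    have h: "A * inverse A = 1" using Apos by simp
    have "V3 (braid_pow Delta3 (2*k)) s = (- A\<^sup>2 - inverse A ^ 2)\<^sup>2"
      unfolding VA 0 using empty_case[OF Apos] by (simp add: writhe_def braid_pow_def)
    also have "\<dots> = 2 + (inverse A ^ 2) ^ 2 + inverse ((inverse A ^ 2) ^ 2)"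
    proof -
      have i4: "inverse ((inverse A ^ 2) ^ 2) = A ^ 4"
        by (simp add: power_inverse[symmetric] power_mult[symmetric])
      show ?thesis unfolding i4 using h by algebra
    qed
    also have "\<dots> = 2 * s ^ (12*k) + s ^ (6*k+2) + s powi (6 * int k - 2)"
      unfolding 0 sA[symmetric] by (simp add: power_int_minus power2_eq_square)
    finally show ?thesis .
  next
    case (Suc k')
    have m: "2*k = 2*k'+2" using Suc by simp
    have "V3 (braid_pow Delta3 (2*k)) s
        = (- (A^3)) powi (- int (3*(2*k'+2))) * (Tr A TI (ds (2*k'+2)) / dd A)"
    proof -
      have kbo: "kauffman_bracket 3 (braid_pow Delta3 (2*k'+2)) A = Tr A TI (ds (2*k'+2)) / dd A"
        by (rule kb_ds) (simp_all add: Apos)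
      show ?thesis unfolding m VA wr kbo by simp
    qed
    also have "Tr A TI (ds (2*k'+2)) = Ce A (A^(6*k')) (inverse A^(6*k')) TI"
      using Tr_ds[OF Apos, of k'] by blast
    also have "(- (A^3)) powi (- int (3*(2*k'+2))) * (Ce A (A^(6*k')) (inverse A^(6*k')) TI / dd A)
       = 2 * (inverse A ^ 2) ^ (12*k'+12) + (inverse A ^ 2) ^ (6*k'+8) + (inverse A ^ 2) ^ (6*k'+4)"
      by (rule fin_even[OF Apos])
    also have "\<dots> = 2 * s ^ (12*k) + s ^ (6*k+2) + s powi (6 * int k - 2)"
    proof -
      have e: "6 * int k - 2 = int (6*k'+4)" using Suc by simp
      show ?thesis unfolding sA[symmetric] e power_int_of_nat using Suc by (simp add: algebra_simps)
    qed
    finally show ?thesis .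
  qed
  show ?thesis using odd even by simp
qed

end
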